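(* Let $\Sigma$ be a non-empty finite or countably infinite alphabet and let $\mu_p$ be the probability map induced by a Bernoulli distribution $p$ on $\Sigma$. If $\alpha\in\Sigma^\omega$ is $\mu_p$-distributed, then $\alpha$ is $\mu_p$-block-distributed.
   Context: $\mu_p(a_1\cdots a_n)=\prod_{i=1}^n p(a_i)$ where $p:\Sigma\to[0,1]$, $\sum_a p(a)=1$. $\alpha$ is $\mu_p$-distributed if for every $w\in\Sigma^+$, $\lim_{N\to\infty}\#_w(\alpha|_{\le N})/N=\mu_p(w)$, where $\#_w(v)$ counts occurrences of $w$ as a contiguous block of $v$ and $\alpha|_{\le N}$ is the length-$N$ prefix. For $\alpha=x_1x_2\cdots$ and $n\ge1$, the $n$-block decomposition is $(\alpha_{(n,r)})_{r\ge1}$ with $\alpha_{(n,r)}=x_{(r-1)n+1}\cdots x_{rn}$. $\alpha$ is $\mu_p$-block-distributed if for every $n\ge1$ and every $w\in\Sigma^n$, $\lim_{k\to\infty}|\{r\le k:\alpha_{(n,r)}=w\}|/k=\mu_p(w)$. *)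

theory Defs
  imports "HOL-Analysis.Analysis" "HOL-Library.Countable"
begin

text \<open>Infinite words over alphabet 'a are modelled as functions nat => 'a, indexed from 0,
  so x_1 x_2 ... corresponds to alpha 0, alpha 1, ...; finite words are lists.\<close>

definition bernoulli_dist :: "('a \<Rightarrow> real) \<Rightarrow> bool" where
  "bernoulli_dist p \<longleftrightarrow> (\<forall>a. 0 \<le> p a \<and> p a \<le> 1) \<and> (p has_sum 1) UNIV"

definition mu :: "('a \<Rightarrow> real) \<Rightarrow> 'a list \<Rightarrow> real" where
  "mu p w = (\<Prod>i<length w. p (w ! i))"

definition factor :: "(nat \<Rightarrow> 'a) \<Rightarrow> nat \<Rightarrow> nat \<Rightarrow> 'a list" where
  "factor \<alpha> i n = map \<alpha> [i..<i + n]"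

definition occ_prefix :: "(nat \<Rightarrow> 'a) \<Rightarrow> 'a list \<Rightarrow> nat \<Rightarrow> nat" where
  "occ_prefix \<alpha> w N = card {i. i + length w \<le> N \<and> factor \<alpha> i (length w) = w}"

definition mu_distributed :: "('a \<Rightarrow> real) \<Rightarrow> (nat \<Rightarrow> 'a) \<Rightarrow> bool" where
  "mu_distributed p \<alpha> \<longleftrightarrow>
     (\<forall>w. w \<noteq> [] \<longrightarrow> ((\<lambda>N. real (occ_prefix \<alpha> w N) / real N) \<longlonglongrightarrow> mu p w))"

text \<open>The r-th block (r >= 1) of the n-block decomposition is factor alpha ((r-1)*n) n.\<close>
definition mu_block_distributed :: "('a \<Rightarrow> real) \<Rightarrow> (nat \<Rightarrow> 'a) \<Rightarrow> bool" where
  "mu_block_distributed p \<alpha> \<longleftrightarrow>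
     (\<forall>n\<ge>1. \<forall>w. length w = n \<longrightarrow>
        ((\<lambda>k. real (card {r. 1 \<le> r \<and> r \<le> k \<and> factor \<alpha> ((r - 1) * n) n = w}) / real k)
           \<longlonglongrightarrow> mu p w))"

end

theory Submission
  imports Defs
begin

definition cnt :: "(nat \<Rightarrow> 'a) \<Rightarrow> 'a list \<Rightarrow> nat \<Rightarrow> nat \<Rightarrow> real" where
  "cnt \<alpha> u s N = (\<Sum>i<N. if factor \<alpha> (i+s) (length u) = u then 1 else 0)"

lemma shift_lim:
  fixes f g :: "nat \<Rightarrow> real"
  assumes "(\<lambda>N. f N / real N) \<longlonglongrightarrow> L" and "\<And>N. \<bar>g N - f (N + d)\<bar> \<le> C"
  shows "(\<lambda>N. g N / real N) \<longlonglongrightarrow> L"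
proof -
  have a: "(\<lambda>N. f (N + d) / real (N + d)) \<longlonglongrightarrow> L"
    using LIMSEQ_ignore_initial_segment[OF assms(1), of d] by simp
  have b: "(\<lambda>N. 1 + real d / real N) \<longlonglongrightarrow> 1 + 0"
    by (intro tendsto_add tendsto_const lim_const_over_n)
  have c: "(\<lambda>N. f (N + d) / real (N + d) * (1 + real d / real N)) \<longlonglongrightarrow> L * (1 + 0)"
    by (intro tendsto_mult a b)
  have d1: "(\<lambda>N. C / real N) \<longlonglongrightarrow> 0" by (rule lim_const_over_n)
  have d2: "(\<lambda>N. - C / real N) \<longlonglongrightarrow> 0" by (rule lim_const_over_n)
  have e: "(\<lambda>N. (g N - f (N + d)) / real N) \<longlonglongrightarrow> 0"
  proof (rule tendsto_sandwich[OF _ _ d2 d1])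
    show "\<forall>\<^sub>F N in sequentially. - C / real N \<le> (g N - f (N + d)) / real N"
    proof (intro always_eventually allI)
      fix N have "- C \<le> g N - f (N + d)" using assms(2)[of N] by (simp add: abs_le_iff)
      then show "- C / real N \<le> (g N - f (N + d)) / real N" using divide_right_mono[of "-C" "g N - f (N + d)" "real N"] by simp
    qed
    show "\<forall>\<^sub>F N in sequentially. (g N - f (N + d)) / real N \<le> C / real N"
      using assms(2) by (intro always_eventually allI) (simp add: divide_right_mono abs_le_iff)
  qed
  have f: "(\<lambda>N. f (N + d) / real (N + d) * (1 + real d / real N) + (g N - f (N + d)) / real N) \<longlonglongrightarrow> L"
    using tendsto_add[OF c e] by simp
  show ?thesis
  proof (rule Lim_transform_eventually[OF f])
    show "\<forall>\<^sub>F N in sequentially. f (N + d) / real (N + d) * (1 + real d / real N) + (g N - f (N + d)) / real N = g N / real N"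
      using eventually_gt_at_top[of "0::nat"]
    proof eventually_elim
      case (elim N)
      have "1 + real d / real N = real (N + d) / real N" using elim by (simp add: field_simps)
      moreover have "real (N + d) > 0" using elim by simp
      moreover have "f (N + d) / real (N + d) * (real (N + d) / real N) = f (N + d) / real N"
        using \<open>real (N + d) > 0\<close> by simp
      moreover have "f (N + d) / real N + (g N - f (N + d)) / real N = g N / real N"
        by (simp add: diff_divide_distrib)
      ultimately show ?case by simp
    qed
  qed
qed

lemma mu_Nil: "mu p [] = 1" by (simp add: mu_def)

lemma mu_Cons: "mu p (a # v) = p a * mu p v"
  unfolding mu_def length_Cons prod.lessThan_Suc_shift by simp

lemma mu_append: "mu p (u @ v) = mu p u * mu p v"
  by (induction u) (simp_all add: mu_Nil mu_Cons)

lemma factor_add: "factor \<alpha> i (a + b) = factor \<alpha> i a @ factor \<alpha> (i + a) b"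
proof -
  have "[i..<i + (a + b)] = [i..<i+a] @ [i+a..<i+a+b]"
    using upt_add_eq_append[of i "i+a" b] by (simp add: add.assoc)
  then show ?thesis unfolding factor_def by (simp add: add.assoc)
qed

lemma length_factor [simp]: "length (factor \<alpha> i n) = n"
  unfolding factor_def by simp

lemma factor_one: "factor \<alpha> i 1 = [\<alpha> i]"
  unfolding factor_def by simp

lemma sum_shift_nat:
  fixes f :: "nat \<Rightarrow> real"
  shows "(\<Sum>r<K. f (r + t)) = (\<Sum>r<K + t. f r) - (\<Sum>r<t. f r)"
  by (induction K) simp_all

definition W :: "'a set \<Rightarrow> nat \<Rightarrow> 'a list set" where
  "W A g = {v. set v \<subseteq> A \<and> length v = g}"

lemma W_Suc: "W A (Suc g) = (\<lambda>(a, v). a # v) ` (A \<times> W A g)"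
  unfolding W_def by (auto simp: length_Suc_conv image_iff)

lemma finite_W: "finite A \<Longrightarrow> finite (W A g)"
  unfolding W_def by (rule finite_lists_length_eq)

lemma sum_W: "finite A \<Longrightarrow> (\<Sum>v\<in>W A g. mu p v) = (sum p A) ^ g"
proof (induction g)
  case 0
  have "W A 0 = {[]}" unfolding W_def by auto
  then show ?case by (simp add: mu_Nil)
next
  case (Suc g)
  have inj: "inj_on (\<lambda>(a, v). a # v) (A \<times> W A g)" by (auto simp: inj_on_def)
  have "(\<Sum>v\<in>W A (Suc g). mu p v) = (\<Sum>x\<in>A \<times> W A g. mu p ((\<lambda>(a, v). a # v) x))"
    unfolding W_Suc by (rule sum.reindex[OF inj, unfolded comp_def])
  also have "\<dots> = (\<Sum>a\<in>A. \<Sum>v\<in>W A g. p a * mu p v)"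
    by (simp only: sum.cartesian_product) (simp add: mu_Cons split_def)
  also have "\<dots> = sum p A * (\<Sum>v\<in>W A g. mu p v)"
    by (simp add: sum_product)
  finally show ?case using Suc by simp
qed

definition Xf :: "(nat \<Rightarrow> 'a) \<Rightarrow> 'a list \<Rightarrow> nat \<Rightarrow> nat \<Rightarrow> nat \<Rightarrow> real" where
  "Xf \<alpha> w j t i = (if factor \<alpha> (i + j + t * length w) (length w) = w then 1 else 0)"

lemma sq_expand:
  fixes X :: "nat \<Rightarrow> real"
  assumes k: "k \<ge> 1"
  shows "((\<Sum>t<k. X t) / real k - q)^2
    = (\<Sum>t<k. \<Sum>t'<k. X t * X t') / (real k)^2 - 2 * q / real k * (\<Sum>t<k. X t) + q^2"
proof -
  have "(\<Sum>t<k. X t) * (\<Sum>t<k. X t) = (\<Sum>t<k. \<Sum>t'<k. X t * X t')" by (rule sum_product)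
  then show ?thesis using k by (simp add: power2_eq_square field_simps)
qed

lemma sum_split_add:
  fixes f :: "nat \<Rightarrow> real"
  shows "(\<Sum>i<M + n. f i) = (\<Sum>i<M. f i) + (\<Sum>j<n. f (M + j))"
  by (induction n) simp_all

lemma sum_blocks:
  fixes f :: "nat \<Rightarrow> real"
  shows "(\<Sum>i<K * n. f i) = (\<Sum>j<n. \<Sum>r<K. f (r * n + j))"
proof (induction K)
  case 0 then show ?case by simp
next
  case (Suc K)
  have "(\<Sum>i<Suc K * n. f i) = (\<Sum>i<K * n + n. f i)" by (simp add: add.commute)
  also have "\<dots> = (\<Sum>i<K * n. f i) + (\<Sum>j<n. f (K * n + j))" by (rule sum_split_add)
  also have "\<dots> = (\<Sum>j<n. \<Sum>r<Suc K. f (r * n + j))" using Suc by (simp add: sum.distrib)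
  finally show ?case .
qed

context
  fixes p :: "'a \<Rightarrow> real" and \<alpha> :: "nat \<Rightarrow> 'a"
  assumes bern: "bernoulli_dist p" and md: "mu_distributed p \<alpha>"
begin

lemma p_bounds: "0 \<le> p a" "p a \<le> 1"
  using bern unfolding bernoulli_dist_def by auto

lemma p_has_sum: "(p has_sum 1) UNIV"
  using bern unfolding bernoulli_dist_def by auto

lemma mu_nonneg: "0 \<le> mu p u"
  unfolding mu_def by (intro prod_nonneg) (simp add: p_bounds)

lemma mu_le1: "mu p u \<le> 1"
  unfolding mu_def by (intro prod_le_1) (simp_all add: p_bounds)

lemma sum_p_le1: "finite A \<Longrightarrow> sum p A \<le> 1"
  by (rule has_sum_mono_neutral[OF has_sum_finite p_has_sum]) (auto simp: p_bounds)

lemma exists_A: "\<delta> > 0 \<Longrightarrow> \<exists>A. finite A \<and> 1 - \<delta> \<le> sum p A"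
proof -
  assume d: "\<delta> > 0"
  have "(sum p \<longlongrightarrow> 1) (finite_subsets_at_top UNIV)"
    using p_has_sum unfolding has_sum_def .
  then have "eventually (\<lambda>X. 1 - \<delta> < sum p X) (finite_subsets_at_top UNIV)"
    using d by (intro order_tendstoD(1)) auto
  then show ?thesis unfolding eventually_finite_subsets_at_top by (auto intro: less_imp_le)
qed

lemma cnt_lim:
  assumes "u \<noteq> []"
  shows "(\<lambda>N. cnt \<alpha> u s N / real N) \<longlonglongrightarrow> mu p u"
proof -
  define m where "m = length u"
  have m1: "m \<ge> 1" using assms unfolding m_def by (cases u) auto
  define c0 where "c0 M = (\<Sum>i<M. if factor \<alpha> i m = u then 1 else 0 :: real)" for M
  have occ: "real (occ_prefix \<alpha> u (M + (m - 1))) = c0 M" for M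
  proof -
    have "{i. i + m \<le> M + (m - 1) \<and> factor \<alpha> i m = u} = {i \<in> {..<M}. factor \<alpha> i m = u}"
      using m1 by auto
    then have "occ_prefix \<alpha> u (M + (m - 1)) = card {i \<in> {..<M}. factor \<alpha> i m = u}"
      unfolding occ_prefix_def m_def by simp
    also have "real (card {i \<in> {..<M}. factor \<alpha> i m = u}) = (\<Sum>i\<in>{i \<in> {..<M}. factor \<alpha> i m = u}. 1)"
      by (rule real_of_card)
    also have "\<dots> = c0 M" unfolding c0_def by (rule sum.inter_filter) simp
    finally show ?thesis .
  qed
  have lim0: "(\<lambda>M. real (occ_prefix \<alpha> u M) / real M) \<longlonglongrightarrow> mu p u"
    using md assms unfolding mu_distributed_def by auto
  have lim1: "(\<lambda>M. c0 M / real M) \<longlonglongrightarrow> mu p u"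
    by (rule shift_lim[OF lim0, where d = "m - 1" and C = 0]) (metis occ abs_zero diff_self order_refl)
  have sh: "cnt \<alpha> u s N = c0 (N + s) - c0 s" for N
  proof (induction N)
    case 0 then show ?case by (simp add: cnt_def)
  next
    case (Suc N) then show ?case by (simp add: cnt_def c0_def m_def)
  qed
  have c0b: "0 \<le> c0 s \<and> c0 s \<le> real s"
  proof -
    have "c0 s \<le> (\<Sum>i<s. 1)" unfolding c0_def by (intro sum_mono) auto
    moreover have "0 \<le> c0 s" unfolding c0_def by (intro sum_nonneg) auto
    ultimately show ?thesis by simp
  qed
  show ?thesis
    by (rule shift_lim[OF lim1, where d = s and C = "real s"]) (use c0b in \<open>simp add: sh\<close>)
qed


lemma sum_letter: "finite A \<Longrightarrow> (\<Sum>a\<in>A. if factor \<alpha> j (length [a]) = [a] then 1 else 0 :: real) = (if \<alpha> j \<in> A then 1 else 0)"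
proof -
  assume A: "finite A"
  have "(\<Sum>a\<in>A. if factor \<alpha> j (length [a]) = [a] then 1 else 0 :: real) = (\<Sum>a\<in>A. if \<alpha> j = a then 1 else 0)"
    by (intro sum.cong refl) (simp add: factor_def)
  also have "\<dots> = (if \<alpha> j \<in> A then 1 else 0)" using A by (simp add: sum.delta)
  finally show ?thesis .
qed

lemma pair_bound:
  assumes w: "w \<noteq> []" and eta: "\<eta> > 0"
  shows "eventually (\<lambda>N. (\<Sum>i<N. if factor \<alpha> (i+s) (length w) = w \<and> factor \<alpha> (i+s+length w+g) (length w) = w then 1 else 0) \<le> real N * (mu p w ^ 2 + \<eta>)) sequentially"
proof -
  define n where "n = length w"
  define q where "q = mu p w"
  define \<delta> where "\<delta> = \<eta> / (2 * (real g + 1))"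
  have d0: "\<delta> > 0" using eta unfolding \<delta>_def by simp
  obtain A where A: "finite A" "1 - \<delta> \<le> sum p A" using exists_A[OF d0] by blast
  have sA: "sum p A \<le> 1" using sum_p_le1[OF A(1)] .
  have sA0: "0 \<le> sum p A" by (intro sum_nonneg) (simp add: p_bounds)
  define P where "P v i = (if factor \<alpha> (i+s) (length (w@v@w)) = w@v@w then 1 else 0 :: real)" for v i
  define Q where "Q a t i = (if factor \<alpha> (i+(s+n+t)) (length [a]) = [a] then 1 else 0 :: real)" for a t i
  define Z where "Z N = (\<Sum>v\<in>W A g. cnt \<alpha> (w@v@w) s N / real N) + (\<Sum>t<g. 1 - (\<Sum>a\<in>A. cnt \<alpha> [a] (s+n+t) N / real N))" for N
  define L where "L = (\<Sum>v\<in>W A g. mu p (w@v@w)) + (\<Sum>t<g. 1 - (\<Sum>a\<in>A. mu p [a]))"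
  have lim: "Z \<longlonglongrightarrow> L" unfolding Z_def L_def
    by (intro tendsto_add tendsto_sum tendsto_diff tendsto_const cnt_lim) (use w in auto)
  have L_eq: "L = q^2 * (sum p A) ^ g + real g * (1 - sum p A)"
  proof -
    have "(\<Sum>v\<in>W A g. mu p (w@v@w)) = (\<Sum>v\<in>W A g. q^2 * mu p v)"
      by (intro sum.cong refl) (simp add: mu_append q_def power2_eq_square)
    also have "\<dots> = q^2 * (sum p A) ^ g" by (simp add: sum_distrib_left[symmetric] sum_W[OF A(1)])
    finally show ?thesis unfolding L_def by (simp add: mu_Cons mu_Nil)
  qed
  have "q^2 * (sum p A) ^ g \<le> q^2" using sA sA0 by (simp add: mult_left_le power_le_one)
  moreover have "real g * (1 - sum p A) \<le> real g * \<delta>" using A(2) by (intro mult_left_mono) auto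
  moreover have "real g * \<delta> \<le> \<eta> / 2" using eta unfolding \<delta>_def by (simp add: field_simps)
  ultimately have "L < q^2 + \<eta>" using eta L_eq by linarith
  then have ev: "eventually (\<lambda>N. Z N < q^2 + \<eta>) sequentially" using order_tendstoD(2)[OF lim] by blast
  have pw: "(if factor \<alpha> (i+s) n = w \<and> factor \<alpha> (i+s+n+g) n = w then 1 else 0)
      \<le> (\<Sum>v\<in>W A g. P v i) + (\<Sum>t<g. 1 - (\<Sum>a\<in>A. Q a t i))" for i
  proof -
    have Qs: "(\<Sum>a\<in>A. Q a t i) = (if \<alpha> (i+(s+n+t)) \<in> A then 1 else 0)" for t
      unfolding Q_def by (rule sum_letter[OF A(1)])
    have nn1: "0 \<le> (\<Sum>v\<in>W A g. P v i)" unfolding P_def by (intro sum_nonneg) auto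
    have nn2: "0 \<le> (\<Sum>t<g. 1 - (\<Sum>a\<in>A. Q a t i))" unfolding Qs by (intro sum_nonneg) auto
    show ?thesis
    proof (cases "factor \<alpha> (i+s) n = w \<and> factor \<alpha> (i+s+n+g) n = w")
      case False
      then have "(if factor \<alpha> (i+s) n = w \<and> factor \<alpha> (i+s+n+g) n = w then 1 else 0::real) = 0" by simp
      then show ?thesis using nn1 nn2 by linarith
    next
      case True
      show ?thesis
      proof (cases "\<forall>t<g. \<alpha> (i+(s+n+t)) \<in> A")
        case allA: True
        define v0 where "v0 = factor \<alpha> (i+s+n) g"
        have v0W: "v0 \<in> W A g" unfolding W_def v0_def factor_def
        proof (safe)
          fix x assume "x \<in> set (map \<alpha> [i + s + n..<i + s + n + g])"
          then obtain y where y: "i+s+n \<le> y" "y < i+s+n+g" "x = \<alpha> y" by auto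
          have "y - (i+s+n) < g" using y by arith
          then have "\<alpha> (i+(s+n+(y - (i+s+n)))) \<in> A" using allA by blast
          moreover have "i+(s+n+(y - (i+s+n))) = y" using y by arith
          ultimately show "x \<in> A" using y by simp
        qed simp
        have "factor \<alpha> (i+s) (length (w@v0@w)) = factor \<alpha> (i+s) (n + (g + n))"
          by (simp add: v0_def n_def)
        also have "\<dots> = w @ v0 @ w" using True unfolding factor_add v0_def by (simp add: add.assoc)
        finally have "P v0 i = 1" unfolding P_def by simp
        then have "1 \<le> (\<Sum>v\<in>W A g. P v i)"
          using member_le_sum[OF v0W, of "\<lambda>v. P v i"] finite_W[OF A(1)] unfolding P_def by auto
        then show ?thesis using nn2 True by simp
      next
        case False
        then obtain t where t: "t < g" "\<alpha> (i+(s+n+t)) \<notin> A" by auto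
        have "1 \<le> (\<Sum>t<g. 1 - (\<Sum>a\<in>A. Q a t i))"
          using member_le_sum[of t "{..<g}" "\<lambda>t. 1 - (\<Sum>a\<in>A. Q a t i)"] t unfolding Qs by auto
        then show ?thesis using nn1 True by simp
      qed
    qed
  qed
  have sumeq: "(\<Sum>i<N. (\<Sum>v\<in>W A g. P v i) + (\<Sum>t<g. 1 - (\<Sum>a\<in>A. Q a t i))) = real N * Z N" if N: "N > 0" for N
  proof -
    have c1: "cnt \<alpha> (w@v@w) s N = (\<Sum>i<N. P v i)" for v unfolding cnt_def P_def ..
    have c2: "cnt \<alpha> [a] (s+n+t) N = (\<Sum>i<N. Q a t i)" for a t unfolding cnt_def Q_def ..
    have "(\<Sum>i<N. (\<Sum>v\<in>W A g. P v i) + (\<Sum>t<g. 1 - (\<Sum>a\<in>A. Q a t i)))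
        = (\<Sum>v\<in>W A g. \<Sum>i<N. P v i) + (\<Sum>t<g. real N - (\<Sum>a\<in>A. \<Sum>i<N. Q a t i))"
      by (simp add: sum.distrib sum_subtractf sum.swap[of _ "{..<N}"])
    also have "\<dots> = real N * Z N"
    proof -
      have e1: "real N * (\<Sum>v\<in>W A g. (\<Sum>i<N. P v i) / real N) = (\<Sum>v\<in>W A g. \<Sum>i<N. P v i)"
        using N by (simp add: sum_divide_distrib[symmetric])
      have e2: "real N * (\<Sum>t<g. 1 - (\<Sum>a\<in>A. (\<Sum>i<N. Q a t i) / real N)) = (\<Sum>t<g. real N - (\<Sum>a\<in>A. \<Sum>i<N. Q a t i))"
        unfolding sum_distrib_left
      proof (rule sum.cong[OF refl])
        fix t
        have "real N * (\<Sum>a\<in>A. (\<Sum>i<N. Q a t i) / real N) = (\<Sum>a\<in>A. \<Sum>i<N. Q a t i)"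
          using N by (simp add: sum_divide_distrib[symmetric])
        then show "real N * (1 - (\<Sum>a\<in>A. (\<Sum>i<N. Q a t i) / real N)) = real N - (\<Sum>a\<in>A. \<Sum>i<N. Q a t i)"
          by (simp add: right_diff_distrib)
      qed
      show ?thesis unfolding Z_def c1 c2 distrib_left e1 e2 ..
    qed
    finally show ?thesis .
  qed
  show ?thesis
    using ev eventually_gt_at_top[of "0::nat"]
  proof eventually_elim
    case (elim N)
    have "(\<Sum>i<N. if factor \<alpha> (i+s) n = w \<and> factor \<alpha> (i+s+n+g) n = w then 1 else 0)
        \<le> (\<Sum>i<N. (\<Sum>v\<in>W A g. P v i) + (\<Sum>t<g. 1 - (\<Sum>a\<in>A. Q a t i)))"
      by (intro sum_mono pw)
    also have "\<dots> = real N * Z N" using sumeq elim by simp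
    also have "\<dots> \<le> real N * (q^2 + \<eta>)" using elim by (intro mult_left_mono) auto
    finally show ?case unfolding n_def q_def .
  qed
qed


lemma Xf_cnt: "(\<Sum>i<N. Xf \<alpha> w j t i) = cnt \<alpha> w (j + t * length w) N"
  unfolding Xf_def cnt_def by (simp add: add.assoc)

lemma cnt_ev_lower:
  assumes "u \<noteq> []" "\<eta> > 0"
  shows "eventually (\<lambda>N. real N * (mu p u - \<eta>) \<le> cnt \<alpha> u s N) sequentially"
proof -
  have "eventually (\<lambda>N. mu p u - \<eta> < cnt \<alpha> u s N / real N) sequentially"
    using order_tendstoD(1)[OF cnt_lim[OF assms(1)]] assms(2) by simp
  then show ?thesis using eventually_gt_at_top[of "0::nat"]
    by eventually_elim (simp add: field_simps)
qed

lemma cnt_ev_upper: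
  assumes "u \<noteq> []" "\<eta> > 0"
  shows "eventually (\<lambda>N. cnt \<alpha> u s N \<le> real N * (mu p u + \<eta>)) sequentially"
proof -
  have "eventually (\<lambda>N. cnt \<alpha> u s N / real N < mu p u + \<eta>) sequentially"
    using order_tendstoD(2)[OF cnt_lim[OF assms(1)]] assms(2) by simp
  then show ?thesis using eventually_gt_at_top[of "0::nat"]
    by eventually_elim (simp add: field_simps)
qed

lemma pair_Xf:
  assumes w: "w \<noteq> []" and eta: "\<eta> > 0" and tt: "t < t'"
  shows "eventually (\<lambda>N. (\<Sum>i<N. Xf \<alpha> w j t i * Xf \<alpha> w j t' i) \<le> real N * (mu p w ^ 2 + \<eta>)) sequentially"
proof -
  define n where "n = length w"
  have n1: "n \<ge> 1" using w unfolding n_def by (cases w) auto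
  define g where "g = (t' - t - 1) * n"
  have eq: "j + t * n + n + g = j + t' * n"
  proof -
    have "t' = t + 1 + (t' - t - 1)" using tt by simp
    then have "t' * n = t * n + n + (t' - t - 1) * n" by (metis add_mult_distrib mult_1)
    then show ?thesis unfolding g_def by simp
  qed
  have "Xf \<alpha> w j t i * Xf \<alpha> w j t' i = (if factor \<alpha> (i+(j + t*n)) (length w) = w \<and> factor \<alpha> (i+(j+t*n)+length w+g) (length w) = w then 1 else 0)" for i
  proof -
    have "i+(j+t*n)+length w+g = i + j + t' * n" using eq unfolding n_def by simp
    then show ?thesis unfolding Xf_def n_def by (simp add: add.assoc)
  qed
  then show ?thesis using pair_bound[OF w eta, of "j + t*n" g] by simp
qed


lemma var_bound:
  assumes w: "w \<noteq> []" and k: "k \<ge> 1" and eta: "\<eta> > 0"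
  shows "eventually (\<lambda>N. (\<Sum>i<N. ((\<Sum>t<k. Xf \<alpha> w j t i) / real k - mu p w)^2) \<le> real N * (mu p w / real k + 3 * \<eta>)) sequentially"
proof -
  define q where "q = mu p w"
  have q0: "0 \<le> q" and q1: "q \<le> 1" unfolding q_def by (simp_all add: mu_nonneg mu_le1)
  define PP where "PP N t t' = (\<Sum>i<N. Xf \<alpha> w j t i * Xf \<alpha> w j t' i)" for N t t'
  define SS where "SS N t = (\<Sum>i<N. Xf \<alpha> w j t i)" for N t
  have Xsq: "Xf \<alpha> w j t i * Xf \<alpha> w j t i = Xf \<alpha> w j t i" for t i unfolding Xf_def by simp
  have E1: "eventually (\<lambda>N. \<forall>t\<in>{..<k}. real N * (q - \<eta>) \<le> SS N t) sequentially"
    by (intro eventually_ball_finite ballI) (simp_all add: SS_def Xf_cnt q_def cnt_ev_lower[OF w eta])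
  have E2: "eventually (\<lambda>N. \<forall>t\<in>{..<k}. \<forall>t'\<in>{..<k}. PP N t t' \<le> real N * (q^2 + \<eta> + (if t = t' then q else 0))) sequentially"
  proof (intro eventually_ball_finite ballI finite_lessThan)
    fix t t' assume t: "t \<in> {..<k}" and t': "t' \<in> {..<k}"
    consider "t = t'" | "t < t'" | "t' < t" by linarith
    then show "eventually (\<lambda>N. PP N t t' \<le> real N * (q^2 + \<eta> + (if t = t' then q else 0))) sequentially"
    proof cases
      case 1
      show ?thesis using cnt_ev_upper[OF w eta, of "j + t * length w"]
      proof eventually_elim
        case (elim N)
        have "PP N t t' = cnt \<alpha> w (j + t * length w) N" unfolding PP_def 1 Xsq Xf_cnt ..
        also have "\<dots> \<le> real N * (q + \<eta>)" using elim unfolding q_def .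
        also have "\<dots> \<le> real N * (q^2 + \<eta> + (if t = t' then q else 0))"
          using 1 by (intro mult_left_mono) auto
        finally show ?case .
      qed
    next
      case 2
      show ?thesis using pair_Xf[OF w eta 2, of j]
      proof eventually_elim
        case (elim N)
        then have "PP N t t' \<le> real N * (q^2 + \<eta>)" unfolding PP_def q_def .
        also have "\<dots> \<le> real N * (q^2 + \<eta> + (if t = t' then q else 0))"
          using q0 by (intro mult_left_mono) auto
        finally show ?case .
      qed
    next
      case 3
      show ?thesis using pair_Xf[OF w eta 3, of j]
      proof eventually_elim
        case (elim N)
        then have "PP N t t' \<le> real N * (q^2 + \<eta>)" unfolding PP_def q_def by (simp add: mult.commute)
        also have "\<dots> \<le> real N * (q^2 + \<eta> + (if t = t' then q else 0))"
          using q0 by (intro mult_left_mono) auto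
        finally show ?case .
      qed
    qed
  qed
  show ?thesis using E1 E2
  proof eventually_elim
    case (elim N)
    have expand: "(\<Sum>i<N. ((\<Sum>t<k. Xf \<alpha> w j t i) / real k - q)^2)
        = (\<Sum>t<k. \<Sum>t'<k. PP N t t') / (real k)^2 - 2 * q / real k * (\<Sum>t<k. SS N t) + real N * q^2"
      unfolding sq_expand[OF k] PP_def SS_def
      by (simp add: sum.distrib sum_subtractf sum_divide_distrib[symmetric] sum_distrib_left[symmetric]
          sum.swap[of _ "{..<N}"])
    have b1: "(\<Sum>t<k. \<Sum>t'<k. PP N t t') \<le> (\<Sum>t<k. \<Sum>t'<k. real N * (q^2 + \<eta> + (if t = t' then q else 0)))"
      using elim by (intro sum_mono) auto
    have b1': "(\<Sum>t<k. \<Sum>t'<k. real N * (q^2 + \<eta> + (if t = t' then q else 0)))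
        = (real k)^2 * (real N * (q^2 + \<eta>)) + real k * (real N * q)"
      by (simp add: sum.distrib distrib_left sum_distrib_left[symmetric] power2_eq_square algebra_simps)
    have b2: "real k * (real N * (q - \<eta>)) \<le> (\<Sum>t<k. SS N t)"
      using sum_mono[of "{..<k}" "\<lambda>t. real N * (q - \<eta>)" "SS N"] elim by simp
    have kpos: "real k > 0" using k by simp
    have t1: "(\<Sum>t<k. \<Sum>t'<k. PP N t t') / (real k)^2 \<le> real N * (q^2 + \<eta>) + real N * q / real k"
    proof -
      have "(\<Sum>t<k. \<Sum>t'<k. PP N t t') / (real k)^2 \<le> ((real k)^2 * (real N * (q^2 + \<eta>)) + real k * (real N * q)) / (real k)^2"
        using b1 b1' by (intro divide_right_mono) auto
      also have "\<dots> = real N * (q^2 + \<eta>) + real N * q / real k"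
        using kpos by (simp add: field_simps power2_eq_square)
      finally show ?thesis .
    qed
    have t2: "2 * q / real k * (real k * (real N * (q - \<eta>))) \<le> 2 * q / real k * (\<Sum>t<k. SS N t)"
      using b2 q0 kpos by (intro mult_left_mono) auto
    have t2': "2 * q / real k * (real k * (real N * (q - \<eta>))) = 2 * q * real N * (q - \<eta>)"
      using kpos by simp
    have fin: "real N * (q^2 + \<eta>) + real N * q / real k - 2 * q * real N * (q - \<eta>) + real N * q^2
        \<le> real N * (q / real k + 3 * \<eta>)"
    proof -
      have "real N * (q^2 + \<eta>) + real N * q / real k - 2 * q * real N * (q - \<eta>) + real N * q^2
          = real N * (q / real k + \<eta> + 2 * q * \<eta>)" by (simp add: algebra_simps power2_eq_square)
      also have "\<dots> \<le> real N * (q / real k + 3 * \<eta>)"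
        using q1 eta by (intro mult_left_mono) auto
      finally show ?thesis .
    qed
    show ?case unfolding q_def[symmetric] expand using t1 t2 t2' fin by linarith
  qed
qed


lemma Xf_shift: "Xf \<alpha> w j t (r * length w) = Xf \<alpha> w j 0 ((r + t) * length w)"
  unfolding Xf_def by (simp add: algebra_simps)

lemma Xf_01: "0 \<le> Xf \<alpha> w j t i" "Xf \<alpha> w j t i \<le> 1"
  unfolding Xf_def by auto

lemma aux_ineq:
  fixes y q e :: real
  assumes "e > 0"
  shows "y \<le> q + e + (y - q)^2 / e"
proof (cases "y - q \<le> e")
  case True
  have "0 \<le> (y - q)^2 / e" using assms by simp
  then show ?thesis using True by linarith
next
  case False
  then have "(y - q) * e \<le> (y - q) * (y - q)" using assms by (intro mult_left_mono) auto
  then have "y - q \<le> (y - q)^2 / e" using assms by (simp add: field_simps power2_eq_square)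
  then show ?thesis using assms by linarith
qed

lemma block_upper:
  assumes w: "w \<noteq> []" and eps: "\<epsilon> > 0"
  shows "eventually (\<lambda>K. (\<Sum>r<K. Xf \<alpha> w j 0 (r * length w)) \<le> real K * (mu p w + \<epsilon>)) sequentially"
proof -
  define n where "n = length w"
  have n1: "n \<ge> 1" using w unfolding n_def by (cases w) auto
  define q where "q = mu p w"
  have q0: "0 \<le> q" and q1: "q \<le> 1" unfolding q_def by (simp_all add: mu_nonneg mu_le1)
  define e where "e = \<epsilon> / 2"
  have e0: "e > 0" using eps unfolding e_def by simp
  define k where "k = nat \<lceil>16 * real n / \<epsilon>^2\<rceil> + 1"
  have k1: "k \<ge> 1" unfolding k_def by simp
  have kbig: "real k \<ge> 16 * real n / \<epsilon>^2" unfolding k_def by linarith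
  define \<eta> where "\<eta> = \<epsilon>^2 / (96 * real n)"
  have eta0: "\<eta> > 0" unfolding \<eta>_def using eps n1 by simp
  define Xb where "Xb r = Xf \<alpha> w j 0 (r * n)" for r
  define F where "F i = ((\<Sum>t<k. Xf \<alpha> w j t i) / real k - q)^2" for i
  obtain N0 where N0: "\<And>N. N \<ge> N0 \<Longrightarrow> (\<Sum>i<N. F i) \<le> real N * (q / real k + 3 * \<eta>)"
    using var_bound[OF w k1 eta0, of j] unfolding eventually_sequentially F_def q_def by blast
  obtain K1 :: nat where K1: "real K1 \<ge> 4 * real k / \<epsilon>" using real_arch_simple by blast
  have coef: "real n * (q / real k + 3 * \<eta>) / e \<le> 3 * \<epsilon> / 16"
  proof -
    have kpos: "real k > 0" using k1 by simp
    have a: "2 * real n * q / (real k * \<epsilon>) \<le> \<epsilon> / 8"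
    proof -
      have "2 * real n * q \<le> 2 * real n * 1" using q1 by (intro mult_left_mono) auto
      also have "\<dots> \<le> \<epsilon> / 8 * (real k * \<epsilon>)"
        using kbig eps by (simp add: field_simps power2_eq_square)
      finally show ?thesis using kpos eps by (simp add: divide_le_eq)
    qed
    have b: "real n * (q / real k + 3 * \<eta>) / e = 2 * real n * q / (real k * \<epsilon>) + \<epsilon> / 16"
      unfolding e_def \<eta>_def using n1 eps kpos by (simp add: field_simps power2_eq_square)
    show ?thesis using a b by simp
  qed
  show ?thesis unfolding eventually_sequentially
  proof (intro exI[of _ "max N0 K1"] allI impI)
    fix K assume K: "max N0 K1 \<le> K"
    define B where "B = (\<Sum>r<K. Xb r)"
    define Y where "Y r = (\<Sum>t<k. Xf \<alpha> w j t (r * n)) / real k" for r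
    have kpos: "real k > 0" using k1 by simp
    have shiftb: "(\<Sum>r<K. Xb (r + t)) \<ge> B - real k" if "t < k" for t
    proof -
      have "(\<Sum>r<K. Xb (r + t)) = (\<Sum>r<K + t. Xb r) - (\<Sum>r<t. Xb r)" by (rule sum_shift_nat)
      moreover have "(\<Sum>r<K. Xb r) \<le> (\<Sum>r<K + t. Xb r)"
        by (intro sum_mono2) (auto simp: Xb_def Xf_01)
      moreover have "(\<Sum>r<t. Xb r) \<le> (\<Sum>r<t. 1)" by (intro sum_mono) (simp add: Xb_def Xf_01)
      ultimately show ?thesis using that unfolding B_def by simp
    qed
    have a: "B \<le> real k + (\<Sum>r<K. Y r)"
    proof -
      have Yeq: "Y r = (\<Sum>t<k. Xb (r + t)) / real k" for r
        unfolding Y_def Xb_def n_def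
        by (intro arg_cong[where f="\<lambda>x. x / real k"] sum.cong refl) (rule Xf_shift)
      have "(\<Sum>r<K. Y r) = (\<Sum>t<k. \<Sum>r<K. Xb (r + t)) / real k"
        unfolding Yeq
        by (simp add: sum_divide_distrib[symmetric] sum.swap[of _ "{..<K}"])
      also have "\<dots> \<ge> (\<Sum>t<k. B - real k) / real k"
        using shiftb kpos by (intro divide_right_mono sum_mono) auto
      finally have "(\<Sum>r<K. Y r) \<ge> B - real k" using kpos by simp
      then show ?thesis by simp
    qed
    have b: "(\<Sum>r<K. Y r) \<le> real K * (q + e) + (\<Sum>r<K. (Y r - q)^2) / e"
    proof -
      have "(\<Sum>r<K. Y r) \<le> (\<Sum>r<K. q + e + (Y r - q)^2 / e)"
        by (intro sum_mono aux_ineq e0)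
      also have "\<dots> = real K * (q + e) + (\<Sum>r<K. (Y r - q)^2) / e"
        by (simp add: sum.distrib sum_divide_distrib)
      finally show ?thesis .
    qed
    have c: "(\<Sum>r<K. (Y r - q)^2) \<le> real (K * n) * (q / real k + 3 * \<eta>)"
    proof -
      have inj: "inj_on (\<lambda>r. r * n) {..<K}" using n1 by (auto simp: inj_on_def)
      have "(\<Sum>r<K. (Y r - q)^2) = (\<Sum>r<K. F (r * n))" unfolding Y_def F_def ..
      also have "\<dots> = (\<Sum>i\<in>(\<lambda>r. r * n) ` {..<K}. F i)" by (simp add: sum.reindex[OF inj])
      also have "\<dots> \<le> (\<Sum>i<K * n. F i)"
      proof (rule sum_mono2)
        show "(\<lambda>r. r * n) ` {..<K} \<subseteq> {..<K * n}" using n1 by auto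
      qed (auto simp: F_def)
      also have "\<dots> \<le> real (K * n) * (q / real k + 3 * \<eta>)"
      proof (rule N0)
        have "K \<le> K * n" using n1 by simp
        then show "N0 \<le> K * n" using K by linarith
      qed
      finally show ?thesis .
    qed
    have c': "(\<Sum>r<K. (Y r - q)^2) / e \<le> real K * (3 * \<epsilon> / 16)"
    proof -
      have "(\<Sum>r<K. (Y r - q)^2) / e \<le> real (K * n) * (q / real k + 3 * \<eta>) / e"
        using c e0 by (intro divide_right_mono) auto
      also have "\<dots> = real K * (real n * (q / real k + 3 * \<eta>) / e)" by simp
      also have "\<dots> \<le> real K * (3 * \<epsilon> / 16)" using coef by (intro mult_left_mono) auto
      finally show ?thesis .
    qed
    have kK: "real k \<le> real K * \<epsilon> / 4"
    proof -
      have "real K \<ge> 4 * real k / \<epsilon>" using K K1 by linarith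
      then show ?thesis using eps by (simp add: field_simps)
    qed
    have "B \<le> real K * (q + \<epsilon>)"
      using a b c' kK unfolding e_def by (simp add: algebra_simps)
    then show "(\<Sum>r<K. Xf \<alpha> w j 0 (r * length w)) \<le> real K * (mu p w + \<epsilon>)"
      unfolding B_def Xb_def n_def q_def .
  qed
qed


lemma block_lower:
  assumes w: "w \<noteq> []" and eps: "\<epsilon> > 0"
  shows "eventually (\<lambda>K. real K * (mu p w - \<epsilon>) \<le> (\<Sum>r<K. Xf \<alpha> w 0 0 (r * length w))) sequentially"
proof -
  define n where "n = length w"
  have n1: "n \<ge> 1" using w unfolding n_def by (cases w) auto
  then obtain m where nm: "n = Suc m" by (cases n) auto
  define q where "q = mu p w"
  define e where "e = \<epsilon> / (2 * real n)"
  have e0: "e > 0" using eps n1 unfolding e_def by simp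
  define G where "G j K = (\<Sum>r<K. Xf \<alpha> w j 0 (r * n))" for j K
  have tot: "cnt \<alpha> w 0 (K * n) = (\<Sum>j<n. G j K)" for K
  proof -
    have "cnt \<alpha> w 0 (K * n) = (\<Sum>i<K * n. if factor \<alpha> i n = w then 1 else 0)"
      unfolding cnt_def n_def by simp
    also have "\<dots> = (\<Sum>j<n. \<Sum>r<K. if factor \<alpha> (r * n + j) n = w then 1 else 0)"
      by (rule sum_blocks)
    also have "\<dots> = (\<Sum>j<n. G j K)" unfolding G_def Xf_def n_def by simp
    finally show ?thesis .
  qed
  obtain N0 where N0: "\<And>N. N \<ge> N0 \<Longrightarrow> real N * (q - e) \<le> cnt \<alpha> w 0 N"
    using cnt_ev_lower[OF w e0, of 0] unfolding eventually_sequentially q_def by blast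
  have E1: "eventually (\<lambda>K. real (K * n) * (q - e) \<le> cnt \<alpha> w 0 (K * n)) sequentially"
    unfolding eventually_sequentially
  proof (intro exI[of _ N0] allI impI)
    fix K assume "N0 \<le> K"
    moreover have "K \<le> K * n" using n1 by simp
    ultimately show "real (K * n) * (q - e) \<le> cnt \<alpha> w 0 (K * n)" by (intro N0) linarith
  qed
  have E2: "eventually (\<lambda>K. \<forall>j\<in>{..<m}. G (Suc j) K \<le> real K * (q + e)) sequentially"
    by (intro eventually_ball_finite ballI finite_lessThan)
       (unfold G_def n_def q_def, rule block_upper[OF w e0])
  show ?thesis using E1 E2
  proof eventually_elim
    case (elim K)
    have "(\<Sum>j<n. G j K) = G 0 K + (\<Sum>j<m. G (Suc j) K)" unfolding nm by (rule sum.lessThan_Suc_shift)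
    moreover have "(\<Sum>j<m. G (Suc j) K) \<le> (\<Sum>j<m. real K * (q + e))"
      using elim by (intro sum_mono) auto
    ultimately have "real (K * n) * (q - e) \<le> G 0 K + real m * (real K * (q + e))"
      using elim tot[of K] by simp
    then have "real K * (real n * q - real n * e) \<le> G 0 K + real K * (real m * q + real m * e)"
      by (simp add: algebra_simps)
    moreover have "real n = real m + 1" using nm by simp
    ultimately have "real K * (q - (real n + real m) * e) \<le> G 0 K"
      by (simp add: algebra_simps)
    moreover have "(real n + real m) * e \<le> \<epsilon>"
    proof -
      have "(real n + real m) * e \<le> (2 * real n) * e" using nm e0 by (intro mult_right_mono) auto
      also have "\<dots> = \<epsilon>" unfolding e_def using n1 by simp
      finally show ?thesis .
    qed
    ultimately have "real K * (q - \<epsilon>) \<le> G 0 K"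
      by (smt (verit) mult_left_mono of_nat_0_le_iff)
    then show ?case unfolding G_def n_def q_def .
  qed
qed

end


theorem proposition5p1:
  fixes p :: "'a::countable \<Rightarrow> real" and \<alpha> :: "nat \<Rightarrow> 'a"
  assumes "bernoulli_dist p"
    and "mu_distributed p \<alpha>"
  shows "mu_block_distributed p \<alpha>"
  unfolding mu_block_distributed_def
proof (intro allI impI)
  fix n :: nat and w :: "'a list"
  assume n1: "n \<ge> 1" and lw: "length w = n"
  have w: "w \<noteq> []" using n1 lw by auto
  define B where "B K = (\<Sum>r<K. Xf \<alpha> w 0 0 (r * length w))" for K
  have card_eq: "real (card {r. 1 \<le> r \<and> r \<le> K \<and> factor \<alpha> ((r - 1) * n) n = w}) = B K" for K
  proof -
    have "{r. 1 \<le> r \<and> r \<le> K \<and> factor \<alpha> ((r - 1) * n) n = w} = Suc ` {r \<in> {..<K}. factor \<alpha> (r * n) n = w}"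
    proof (intro set_eqI iffI)
      fix x assume "x \<in> {r. 1 \<le> r \<and> r \<le> K \<and> factor \<alpha> ((r - 1) * n) n = w}"
      then show "x \<in> Suc ` {r \<in> {..<K}. factor \<alpha> (r * n) n = w}"
        by (intro image_eqI[of _ _ "x - 1"]) auto
    qed auto
    then have "card {r. 1 \<le> r \<and> r \<le> K \<and> factor \<alpha> ((r - 1) * n) n = w} = card {r \<in> {..<K}. factor \<alpha> (r * n) n = w}"
      by (simp add: card_image)
    also have "real (card {r \<in> {..<K}. factor \<alpha> (r * n) n = w}) = (\<Sum>r\<in>{r \<in> {..<K}. factor \<alpha> (r * n) n = w}. 1)"
      by (rule real_of_card)
    also have "\<dots> = B K" unfolding B_def Xf_def lw by (subst sum.inter_filter) simp_all
    finally show ?thesis .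
  qed
  have "(\<lambda>K. B K / real K) \<longlonglongrightarrow> mu p w"
  proof (rule tendstoI)
    fix e :: real assume e: "e > 0"
    have e2: "e / 2 > 0" using e by simp
    show "eventually (\<lambda>K. dist (B K / real K) (mu p w) < e) sequentially"
      using block_upper[OF assms w e2, of 0] block_lower[OF assms w e2] eventually_gt_at_top[of "0::nat"]
    proof eventually_elim
      case (elim K)
      then have "B K / real K \<le> mu p w + e / 2" "mu p w - e / 2 \<le> B K / real K"
        unfolding B_def by (simp_all add: field_simps)
      then show ?case using e by (simp add: dist_real_def abs_less_iff)
    qed
  qed
  then show "(\<lambda>k. real (card {r. 1 \<le> r \<and> r \<le> k \<and> factor \<alpha> ((r - 1) * n) n = w}) / real k) \<longlonglongrightarrow> mu p w"
    unfolding card_eq .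
qed

end
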